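(* Let $\mathbf{U}$ and $\mathbf{V}$ be group varieties with $\mathbf{U}\subseteq\mathbf{V}$. Then every finite connected directed graph $\Gamma$ that has property $\mathrm{P}(\mathbf{U})$ also has property $\mathrm{P}(\mathbf{V})$.
   Context: All graphs are finite directed graphs, possibly with loops and multiple edges. A graph $\Gamma$ has vertex set $V(\Gamma)$ and edge set $E(\Gamma)$, and each edge $e$ has an initial vertex $\iota e$ and a terminal vertex $\tau e$. A subgraph is regarded as a set of vertices and edges (containing the endpoints of its edges); unions and intersections of subgraphs are taken as sets of vertices and edges. Connectedness refers to the underlying undirected graph. Let $\overline{\Gamma}$ be the graph with vertex set $V(\Gamma)$ and edge set $E(\Gamma)\sqcup E(\Gamma)^{-1}$, where for $e\in E(\Gamma)$ the formal edge $e^{-1}$ goes from $\tau e$ to $\iota e$. A path $p$ in $\overline{\Gamma}$ is either an empty path at a vertex or a sequence $e_1\cdots e_n$ of edges of $\overline{\Gamma}$ with $\tau e_i=\iota e_{i+1}$; it has initial vertex $\iota p$ and terminal vertex $\tau p$, and is regarded as a word over the alphabet $E(\Gamma)\cup E(\Gamma)^{-1}$. The span $\langle p\rangle$ is the subgraph of $\Gamma$ consisting of the vertices traversed by $p$ and the edges $e\in E(\Gamma)$ such that $e$ or $e^{-1}$ occurs in $p$. For a group variety $\mathbf{U}$ and words $u,v$ over $X\cup X^{-1}$, write $u\equiv_{\mathbf U} v$ if $u$ and $v$ represent the same element of the relatively free group of $\mathbf U$ on $X$ (i.e. the identity $u=v$ holds in $\mathbf U$), and $[u]_{\mathbf U}$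 for the class of $u$. The free $g\mathbf U$-category on $\Gamma$ has vertex set $V(\Gamma)$; its arrows from $i$ to $j$ are the triples $(i,[p]_{\mathbf U},j)$ with $p$ an $(i,j)$-path in $\overline\Gamma$, and $(i,[p]_{\mathbf U},j)(j,[q]_{\mathbf U},k)=(i,[pq]_{\mathbf U},k)$; for an arrow $x=(i,[p]_{\mathbf U},j)$ put $\iota x=i$, $\tau x=j$. For each arrow $x$ define subgraphs of $\Gamma$: $C_0(x)=\bigcap\{\langle p\rangle : p \text{ a path in }\overline\Gamma \text{ with } (\iota p,[p]_{\mathbf U},\tau p)=x\}$; $P_n(x)$ is the connected component of $C_n(x)$ containing $\iota x$; $C_{n+1}(x)=\bigcap\{P_n(x_1)\cup\cdots\cup P_n(x_k) : k\ge 1,\ x_1,\dots,x_k \text{ arrows with } x_1\cdots x_k=x\}$; and $P(x)=\bigcap_{n\ge 0}P_n(x)$. A connected graph $\Gamma$ has property $\mathrm{P}(\mathbf U)$ if $\tau x\in P(x)$ for every arrow $x$ of the free $g\mathbf U$-category on $\Gamma$. *)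

theory Defs
  imports Main "Graph_Theory.Digraph" "Graph_Theory.Digraph_Component"
begin

text \<open>A word over the alphabet X \<union> X^-1 is a list of pairs (x, b):
  (x, True) stands for the letter x, (x, False) for its formal inverse.\<close>
type_synonym 'x word = "('x \<times> bool) list"

definition inv_word :: "'x word \<Rightarrow> 'x word" where
  "inv_word w = rev (map (\<lambda>(x, b). (x, \<not> b)) w)"

definition subst_word :: "('x \<Rightarrow> 'y word) \<Rightarrow> 'x word \<Rightarrow> 'y word" where
  "subst_word \<sigma> w = concat (map (\<lambda>(x, b). if b then \<sigma> x else inv_word (\<sigma> x)) w)"

text \<open>A group variety is represented (Birkhoff) by its set of laws: the set of all
  identities u = v, with u, v words over countably many variables (nat), which hold in
  every group of the variety.  These sets are exactly the fully invariant congruences of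
  the free monoid on nat \<union> nat^-1 that contain the free-group cancellation relations,
  i.e. the fully invariant normal subgroups of the free group of countable rank.\<close>
type_synonym laws = "(nat word \<times> nat word) set"

definition group_variety :: "laws \<Rightarrow> bool" where
  "group_variety L \<longleftrightarrow>
     (\<forall>u. (u, u) \<in> L) \<and>
     (\<forall>u v. (u, v) \<in> L \<longrightarrow> (v, u) \<in> L) \<and>
     (\<forall>u v w. (u, v) \<in> L \<longrightarrow> (v, w) \<in> L \<longrightarrow> (u, w) \<in> L) \<and>
     (\<forall>u v a c. (u, v) \<in> L \<longrightarrow> (a @ u @ c, a @ v @ c) \<in> L) \<and>
     (\<forall>x b. ([(x, b), (x, \<not> b)], []) \<in> L) \<and>
     (\<forall>\<sigma> u v. (u, v) \<in> L \<longrightarrow> (subst_word \<sigma> u, subst_word \<sigma> v) \<in> L)"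

text \<open>Inclusion of varieties U \<subseteq> V (as classes of groups) corresponds to the reverse
  inclusion of their sets of laws.\<close>
definition subvariety :: "laws \<Rightarrow> laws \<Rightarrow> bool" where
  "subvariety U V \<longleftrightarrow> V \<subseteq> U"

text \<open>u \<equiv>_U v for words over an arbitrary alphabet X: the identity u = v holds in U,
  i.e. every substitution instance of it (into words over nat) is a law of U.\<close>
definition word_equiv :: "laws \<Rightarrow> 'x word \<Rightarrow> 'x word \<Rightarrow> bool" where
  "word_equiv L u v \<longleftrightarrow> (\<forall>\<sigma> :: 'x \<Rightarrow> nat word. (subst_word \<sigma> u, subst_word \<sigma> v) \<in> L)"

definition dstart :: "('v, 'e) pre_digraph \<Rightarrow> 'e \<times> bool \<Rightarrow> 'v" where
  "dstart G x = (if snd x then tail G (fst x) else head G (fst x))"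

definition dend :: "('v, 'e) pre_digraph \<Rightarrow> 'e \<times> bool \<Rightarrow> 'v" where
  "dend G x = (if snd x then head G (fst x) else tail G (fst x))"

fun is_gpath :: "('v, 'e) pre_digraph \<Rightarrow> 'v \<Rightarrow> 'e word \<Rightarrow> 'v \<Rightarrow> bool" where
  "is_gpath G i [] j \<longleftrightarrow> i \<in> verts G \<and> i = j"
| "is_gpath G i (x # xs) j \<longleftrightarrow> fst x \<in> arcs G \<and> dstart G x = i \<and> is_gpath G (dend G x) xs j"

type_synonym ('v, 'e) subgraph = "'v set \<times> 'e set"

definition span :: "('v, 'e) pre_digraph \<Rightarrow> 'v \<Rightarrow> 'e word \<Rightarrow> ('v, 'e) subgraph" where
  "span G i p = (insert i (dend G ` set p), fst ` set p)"

definition sg_Inter :: "('v, 'e) subgraph set \<Rightarrow> ('v, 'e) subgraph" where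
  "sg_Inter S = (\<Inter> (fst ` S), \<Inter> (snd ` S))"

definition sg_Union :: "('v, 'e) subgraph set \<Rightarrow> ('v, 'e) subgraph" where
  "sg_Union S = (\<Union> (fst ` S), \<Union> (snd ` S))"

text \<open>Connected component of the subgraph H containing vertex i (empty if i \<notin> H);
  connectivity in the underlying undirected graph.\<close>
definition sg_comp :: "('v, 'e) pre_digraph \<Rightarrow> ('v, 'e) subgraph \<Rightarrow> 'v \<Rightarrow> ('v, 'e) subgraph" where
  "sg_comp G H i =
     (let adj = (\<Union>e\<in>snd H. {(tail G e, head G e), (head G e, tail G e)});
          W = {v. i \<in> fst H \<and> v \<in> fst H \<and> (i, v) \<in> adj\<^sup>*}
      in (W, {e \<in> snd H. tail G e \<in> W \<and> head G e \<in> W}))"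

text \<open>An arrow (i, [p]_U, j) is represented by any triple (i, p, j) with is_gpath G i p j.\<close>

definition C0 :: "laws \<Rightarrow> ('v, 'e) pre_digraph \<Rightarrow> 'v \<times> 'e word \<times> 'v \<Rightarrow> ('v, 'e) subgraph" where
  "C0 U G x = (case x of (i, p, j) \<Rightarrow>
      sg_Inter {span G i q | q. is_gpath G i q j \<and> word_equiv U q p})"

text \<open>Factorisations x = x_1 \<cdots> x_k (k \<ge> 1) of the arrow (i,p,j), as lists of representing
  triples.\<close>
fun chain :: "('v, 'e) pre_digraph \<Rightarrow> 'v \<Rightarrow> ('v \<times> 'e word \<times> 'v) list \<Rightarrow> 'v \<Rightarrow> bool" where
  "chain G i [] j \<longleftrightarrow> i = j"
| "chain G i ((a, q, b) # ys) j \<longleftrightarrow> a = i \<and> is_gpath G a q b \<and> chain G b ys j"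

definition factorization :: "laws \<Rightarrow> ('v, 'e) pre_digraph \<Rightarrow> 'v \<times> 'e word \<times> 'v
    \<Rightarrow> ('v \<times> 'e word \<times> 'v) list \<Rightarrow> bool" where
  "factorization U G x ys = (case x of (i, p, j) \<Rightarrow>
      ys \<noteq> [] \<and> chain G i ys j \<and> word_equiv U (concat (map (\<lambda>y. fst (snd y)) ys)) p)"

fun Cn :: "laws \<Rightarrow> ('v, 'e) pre_digraph \<Rightarrow> nat \<Rightarrow> 'v \<times> 'e word \<times> 'v \<Rightarrow> ('v, 'e) subgraph" where
  "Cn U G 0 x = C0 U G x"
| "Cn U G (Suc n) x =
     sg_Inter {sg_Union ((\<lambda>y. sg_comp G (Cn U G n y) (fst y)) ` set ys) | ys. factorization U G x ys}"

definition Pn :: "laws \<Rightarrow> ('v, 'e) pre_digraph \<Rightarrow> nat \<Rightarrow> 'v \<times> 'e word \<times> 'v \<Rightarrow> ('v, 'e) subgraph" where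
  "Pn U G n x = sg_comp G (Cn U G n x) (fst x)"

definition Pinf :: "laws \<Rightarrow> ('v, 'e) pre_digraph \<Rightarrow> 'v \<times> 'e word \<times> 'v \<Rightarrow> ('v, 'e) subgraph" where
  "Pinf U G x = sg_Inter (range (\<lambda>n. Pn U G n x))"

definition property_P :: "laws \<Rightarrow> ('v, 'e) pre_digraph \<Rightarrow> bool" where
  "property_P U G \<longleftrightarrow> connected G \<and>
     (\<forall>i p j. is_gpath G i p j \<longrightarrow> j \<in> fst (Pinf U G (i, p, j)))"

end

theory Submission
  imports Defs
begin

definition sle :: "('v, 'e) subgraph \<Rightarrow> ('v, 'e) subgraph \<Rightarrow> bool" where
  "sle A B \<longleftrightarrow> fst A \<subseteq> fst B \<and> snd A \<subseteq> snd B"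

lemma we_mono: "V \<subseteq> U \<Longrightarrow> word_equiv V q p \<Longrightarrow> word_equiv U q p"
  unfolding word_equiv_def by blast

lemma comp_mono:
  assumes "sle H H'" shows "sle (sg_comp G H i) (sg_comp G H' i)"
proof -
  let ?a = "\<Union>e\<in>snd H. {(tail G e, head G e), (head G e, tail G e)}"
  let ?a' = "\<Union>e\<in>snd H'. {(tail G e, head G e), (head G e, tail G e)}"
  have "?a \<subseteq> ?a'" using assms unfolding sle_def by blast
  hence r: "?a\<^sup>* \<subseteq> ?a'\<^sup>*" by (rule rtrancl_mono)
  have W: "{v. i \<in> fst H \<and> v \<in> fst H \<and> (i, v) \<in> ?a\<^sup>*} \<subseteq> {v. i \<in> fst H' \<and> v \<in> fst H' \<and> (i, v) \<in> ?a'\<^sup>*}"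
    using assms r unfolding sle_def by blast
  show ?thesis unfolding sle_def sg_comp_def Let_def prod.sel
    using W assms unfolding sle_def by blast
qed

lemma inter_anti:
  assumes "\<And>a. a \<in> S' \<Longrightarrow> \<exists>b\<in>S. sle b a" shows "sle (sg_Inter S) (sg_Inter S')"
  using assms unfolding sle_def sg_Inter_def by (fastforce)

lemma union_mono:
  assumes "\<And>y. y \<in> A \<Longrightarrow> sle (f y) (g y)" shows "sle (sg_Union (f ` A)) (sg_Union (g ` A))"
  using assms unfolding sle_def sg_Union_def by fastforce

lemma Cn_mono:
  assumes "V \<subseteq> U" shows "sle (Cn U G n x) (Cn V G n x)"
proof (induction n arbitrary: x)
  case 0
  obtain i p j where x: "x = (i, p, j)" by (cases x) auto
  show ?case unfolding x Cn.simps C0_def prod.case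
  proof (rule inter_anti)
    fix a assume "a \<in> {Defs.span G i q |q. is_gpath G i q j \<and> word_equiv V q p}"
    then obtain q where "a = Defs.span G i q" "is_gpath G i q j" "word_equiv V q p" by blast
    hence m: "a \<in> {Defs.span G i q |q. is_gpath G i q j \<and> word_equiv U q p}"
      using we_mono[OF assms] by blast
    have "sle a a" by (simp add: sle_def)
    with m show "\<exists>b\<in>{Defs.span G i q |q. is_gpath G i q j \<and> word_equiv U q p}. sle b a"
      by (rule bexI[rotated])
  qed
next
  case (Suc n)
  show ?case unfolding Cn.simps
  proof (rule inter_anti)
    fix a assume "a \<in> {sg_Union ((\<lambda>y. sg_comp G (Cn V G n y) (fst y)) ` set ys) |ys. factorization V G x ys}"
    then obtain ys where a: "a = sg_Union ((\<lambda>y. sg_comp G (Cn V G n y) (fst y)) ` set ys)"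
      and f: "factorization V G x ys" by blast
    obtain i p j where x: "x = (i, p, j)" by (cases x) auto
    have fu: "factorization U G x ys" using f we_mono[OF assms]
      unfolding factorization_def x prod.case by blast
    have sl: "sle (sg_Union ((\<lambda>y. sg_comp G (Cn U G n y) (fst y)) ` set ys)) a"
      unfolding a by (rule union_mono, rule comp_mono, rule Suc)
    show "\<exists>b\<in>{sg_Union ((\<lambda>y. sg_comp G (Cn U G n y) (fst y)) ` set ys) |ys. factorization U G x ys}. sle b a"
    proof (rule bexI)
      show "sg_Union ((\<lambda>y. sg_comp G (Cn U G n y) (fst y)) ` set ys) \<in> {sg_Union ((\<lambda>y. sg_comp G (Cn U G n y) (fst y)) ` set ys) |ys. factorization U G x ys}"
        using fu by blast
    qed (rule sl)
  qed
qed

theorem lemma2p4: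
  fixes U V :: laws and G :: "('v, 'e) pre_digraph"
  assumes "group_variety U" and "group_variety V" and "subvariety U V"
    and "fin_digraph G" and "connected G"
    and "property_P U G"
  shows "property_P V G"
proof -
  have VU: "V \<subseteq> U" using assms(3) unfolding subvariety_def .
  have le: "sle (Pinf U G x) (Pinf V G x)" for x
    unfolding Pinf_def Pn_def
  proof (rule inter_anti)
    fix a assume "a \<in> range (\<lambda>n. sg_comp G (Cn V G n x) (fst x))"
    then obtain n where a: "a = sg_comp G (Cn V G n x) (fst x)" by (rule rangeE)
    show "\<exists>b\<in>range (\<lambda>n. sg_comp G (Cn U G n x) (fst x)). sle b a"
    proof (rule bexI)
      show "sg_comp G (Cn U G n x) (fst x) \<in> range (\<lambda>n. sg_comp G (Cn U G n x) (fst x))"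
        by (rule rangeI)
      show "sle (sg_comp G (Cn U G n x) (fst x)) a" unfolding a
        by (rule comp_mono[OF Cn_mono[OF VU]])
    qed
  qed
  have c: "connected G" by (rule assms(5))
  have h: "\<And>i p j. is_gpath G i p j \<Longrightarrow> j \<in> fst (Pinf U G (i, p, j))"
    using assms(6) unfolding property_P_def by simp
  have "\<And>i p j. is_gpath G i p j \<Longrightarrow> j \<in> fst (Pinf V G (i, p, j))"
  proof -
    fix i p j assume "is_gpath G i p j"
    hence "j \<in> fst (Pinf U G (i, p, j))" by (rule h)
    moreover have "fst (Pinf U G (i, p, j)) \<subseteq> fst (Pinf V G (i, p, j))"
      using le[of "(i, p, j)"] unfolding sle_def by (rule conjunct1)
    ultimately show "j \<in> fst (Pinf V G (i, p, j))" by (rule subsetD[rotated])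
  qed
  thus ?thesis unfolding property_P_def using c by simp
qed

end
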